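(* Let $\mathcal{Q}=\mathcal{Q}_\ell(T,X,Y)\subseteq\mathcal{P}_\ell(T,X)$. For all $\alpha,\beta\in\mathcal{Q}$, $\alpha\,\sigma^{\mathcal{Q}}\,\beta$ if and only if $\alpha\,\sigma^{\mathcal{P}}\,\beta$, where $\sigma^{\mathcal{P}}$ is the least monoid congruence on $\mathcal{P}_\ell(T,X)$ containing $X\times X$ and $\sigma^{\mathcal{Q}}$ is the least monoid congruence on $\mathcal{Q}$ containing $Y\times Y$.
   Context: Let $T$ be a monoid, $X$ a semilattice with identity $1_X$ (ordered by $e\le f$ iff $ef=e$) with an order-preserving left action of $T$. $\mathcal{P}_\ell(T,X)$: let $T*X$ be the semigroup free product acting on $X$ (elements of $X$ act by multiplication), $\omega^+=\omega\cdot1_X$, $\sim$ the semigroup congruence generated by $\{(\alpha^+\alpha,\alpha)\}\cup\{(1_T,1_X)\}$, and $\mathcal{P}_\ell(T,X)=(T*X)/\sim$ with $[\alpha]^+=[\alpha^+]$; $X$, $T$ are identified with their injective images. It is known to be a left Ehresmann monoid with projections $X$ in which every $\sigma^{\mathcal{P}}$-class contains exactly one element of $T$. Let $Y$ be a subsemilattice of $X$ having an identity, satisfying (A): for all $t\in T$, $e,f\in Y$ with $e\le f$, $t\cdot f\in Y$ implies $t\cdot e\in Y$; (B): for all $t\in T$ there is $g\in Y$ with $t\cdot g\in Y$. $H^{\mathcal{Q}}=\{te:t\in T,e\in Y,t\cdot e\in Y\}$, and $\mathcal{Q}_\ell(T,X,Y)$ is the subsemigroup of $\mathcal{P}_\ell(T,X)$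 generated by $H^{\mathcal{Q}}$; it is a monoid with identity the identity of $Y$. *)

theory Defs
  imports Main
begin

definition congruence_on :: "'m set \<Rightarrow> ('m \<Rightarrow> 'm \<Rightarrow> 'm) \<Rightarrow> 'm rel \<Rightarrow> bool" where
  "congruence_on M f \<rho> \<longleftrightarrow> equiv M \<rho> \<and>
     (\<forall>a b c. (a, b) \<in> \<rho> \<and> c \<in> M \<longrightarrow> (f c a, f c b) \<in> \<rho> \<and> (f a c, f b c) \<in> \<rho>)"

definition least_congruence :: "'m set \<Rightarrow> ('m \<Rightarrow> 'm \<Rightarrow> 'm) \<Rightarrow> 'm rel \<Rightarrow> 'm rel" where
  "least_congruence M f R = \<Inter>{\<rho>. congruence_on M f \<rho> \<and> R \<subseteq> \<rho>}"

text \<open>Words of the free semigroup on the disjoint union of T and X.\<close>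

definition words :: "('a + 'x) list set" where
  "words = {w. w \<noteq> []}"

fun word_act :: "('a \<Rightarrow> 'x \<Rightarrow> 'x) \<Rightarrow> ('a + 'x::semilattice_inf) list \<Rightarrow> 'x \<Rightarrow> 'x" where
  "word_act act [] x = x"
| "word_act act (Inl t # w) x = act t (word_act act w x)"
| "word_act act (Inr e # w) x = inf e (word_act act w x)"

definition word_plus :: "('a \<Rightarrow> 'x \<Rightarrow> 'x) \<Rightarrow> ('a + 'x::bounded_semilattice_inf_top) list \<Rightarrow> 'x" where
  "word_plus act w = word_act act w top"

text \<open>Generating pairs: the defining relations of the semigroup free product T*X
(as a quotient of the free semigroup), plus (alpha^+ alpha, alpha) and (1_T, 1_X).\<close>

definition gens :: "('a::monoid_mult \<Rightarrow> 'x \<Rightarrow> 'x) \<Rightarrow> (('a + 'x::bounded_semilattice_inf_top) list) rel" where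
  "gens act =
     {([Inl s, Inl t], [Inl (s * t)]) | s t. True}
   \<union> {([Inr e, Inr f], [Inr (inf e f)]) | e f. True}
   \<union> {(Inr (word_plus act w) # w, w) | w. w \<noteq> []}
   \<union> {([Inl 1], [Inr top])}"

definition simP :: "('a::monoid_mult \<Rightarrow> 'x \<Rightarrow> 'x) \<Rightarrow> (('a + 'x::bounded_semilattice_inf_top) list) rel" where
  "simP act = least_congruence words (@) (gens act)"

definition Pcar :: "('a::monoid_mult \<Rightarrow> 'x \<Rightarrow> 'x) \<Rightarrow> ('a + 'x::bounded_semilattice_inf_top) list set set" where
  "Pcar act = words // simP act"

definition pmult :: "('a::monoid_mult \<Rightarrow> 'x \<Rightarrow> 'x) \<Rightarrow> ('a + 'x::bounded_semilattice_inf_top) list set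
     \<Rightarrow> ('a + 'x) list set \<Rightarrow> ('a + 'x) list set" where
  "pmult act A B = simP act `` {a @ b | a b. a \<in> A \<and> b \<in> B}"

definition embT :: "('a::monoid_mult \<Rightarrow> 'x \<Rightarrow> 'x) \<Rightarrow> 'a \<Rightarrow> ('a + 'x::bounded_semilattice_inf_top) list set" where
  "embT act t = simP act `` {[Inl t]}"

definition embX :: "('a::monoid_mult \<Rightarrow> 'x \<Rightarrow> 'x) \<Rightarrow> 'x \<Rightarrow> ('a + 'x::bounded_semilattice_inf_top) list set" where
  "embX act e = simP act `` {[Inr e]}"

definition HQ :: "('a::monoid_mult \<Rightarrow> 'x \<Rightarrow> 'x) \<Rightarrow> 'x set \<Rightarrow> ('a + 'x::bounded_semilattice_inf_top) list set set" where
  "HQ act Y = {pmult act (embT act t) (embX act e) | t e. e \<in> Y \<and> act t e \<in> Y}"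

definition Qcar :: "('a::monoid_mult \<Rightarrow> 'x \<Rightarrow> 'x) \<Rightarrow> 'x set \<Rightarrow> ('a + 'x::bounded_semilattice_inf_top) list set set" where
  "Qcar act Y = \<Inter>{S. HQ act Y \<subseteq> S \<and> (\<forall>a\<in>S. \<forall>b\<in>S. pmult act a b \<in> S)}"

definition sigmaP :: "('a::monoid_mult \<Rightarrow> 'x \<Rightarrow> 'x) \<Rightarrow> (('a + 'x::bounded_semilattice_inf_top) list set) rel" where
  "sigmaP act = least_congruence (Pcar act) (pmult act) {(embX act e, embX act f) | e f. True}"

definition sigmaQ :: "('a::monoid_mult \<Rightarrow> 'x \<Rightarrow> 'x) \<Rightarrow> 'x set \<Rightarrow> (('a + 'x::bounded_semilattice_inf_top) list set) rel" where
  "sigmaQ act Y = least_congruence (Qcar act Y) (pmult act)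
     {(embX act e, embX act f) | e f. e \<in> Y \<and> f \<in> Y}"

end

theory Submission
  imports Defs
begin

lemma least_sub: "congruence_on M f \<rho> \<Longrightarrow> R \<subseteq> \<rho> \<Longrightarrow> least_congruence M f R \<subseteq> \<rho>"
  unfolding least_congruence_def by blast

lemma least_cong:
  assumes "\<And>a b. a \<in> M \<Longrightarrow> b \<in> M \<Longrightarrow> f a b \<in> M" "R \<subseteq> M \<times> M"
  shows "congruence_on M f (least_congruence M f R)" "R \<subseteq> least_congruence M f R"
proof -
  have top: "congruence_on M f (M \<times> M)" using assms(1)
    unfolding congruence_on_def equiv_def refl_on_def sym_def trans_def by auto
  show "R \<subseteq> least_congruence M f R" unfolding least_congruence_def by blast
  let ?F = "{\<rho>. congruence_on M f \<rho> \<and> R \<subseteq> \<rho>}"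
  have L: "least_congruence M f R = \<Inter>?F" by (simp add: least_congruence_def)
  have sub: "\<Inter>?F \<subseteq> M \<times> M" using least_sub[OF top assms(2)] L by simp
  have eq: "\<And>\<rho>. \<rho> \<in> ?F \<Longrightarrow> equiv M \<rho>" unfolding congruence_on_def by blast
  have cg: "\<And>\<rho> a b c. \<rho> \<in> ?F \<Longrightarrow> (a, b) \<in> \<rho> \<Longrightarrow> c \<in> M \<Longrightarrow> (f c a, f c b) \<in> \<rho> \<and> (f a c, f b c) \<in> \<rho>"
    unfolding congruence_on_def by blast
  have e: "equiv M (\<Inter>?F)"
  proof (rule equivI)
    show "\<Inter>?F \<subseteq> M \<times> M" by (rule sub)
    show "refl_on M (\<Inter>?F)" unfolding refl_on_def using eq by (auto dest: equiv_class_self)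
    show "sym (\<Inter>?F)" unfolding sym_def using eq by (meson Inter_iff equiv_def symD)
    show "trans (\<Inter>?F)" unfolding trans_def using eq by (meson Inter_iff equiv_def transD)
  qed
  have c: "\<forall>a b c. (a, b) \<in> \<Inter>?F \<and> c \<in> M \<longrightarrow> (f c a, f c b) \<in> \<Inter>?F \<and> (f a c, f b c) \<in> \<Inter>?F"
    using cg by blast
  show "congruence_on M f (least_congruence M f R)"
    unfolding L congruence_on_def[of M f "\<Inter>?F"] using e c by blast
qed

fun phi :: "('a::monoid_mult + 'x) list \<Rightarrow> 'a" where
  "phi [] = 1"
| "phi (Inl t # w) = t * phi w"
| "phi (Inr e # w) = phi w"

lemma phi_append: "phi (a @ b) = phi a * phi b"
  by (induction a rule: phi.induct) (auto simp: mult.assoc)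

context
  fixes act :: "'a::monoid_mult \<Rightarrow> 'x::bounded_semilattice_inf_top \<Rightarrow> 'x"
begin

definition cl :: "('a + 'x) list \<Rightarrow> ('a + 'x) list set" where
  "cl w = simP act `` {w}"

lemma words_app: "a \<in> words \<Longrightarrow> b \<in> words \<Longrightarrow> a @ b \<in> words"
  by (simp add: words_def)

lemma gens_words: "gens act \<subseteq> words \<times> words"
  unfolding gens_def words_def by auto

lemma simP_cong: "congruence_on words (@) (simP act)"
  unfolding simP_def by (rule least_cong(1)[OF words_app gens_words])

lemma gens_simP: "gens act \<subseteq> simP act"
  unfolding simP_def by (rule least_cong(2)[OF words_app gens_words])

lemma simP_equiv: "equiv words (simP act)"
  using simP_cong unfolding congruence_on_def by blast

lemma simP_mr: "(u, v) \<in> simP act \<Longrightarrow> c \<in> words \<Longrightarrow> (u @ c, v @ c) \<in> simP act"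
  using simP_cong unfolding congruence_on_def by (elim conjE allE[of _ u] allE[of _ v] allE[of _ c]) simp

lemma simP_ml: "(u, v) \<in> simP act \<Longrightarrow> c \<in> words \<Longrightarrow> (c @ u, c @ v) \<in> simP act"
  using simP_cong unfolding congruence_on_def by (elim conjE allE[of _ u] allE[of _ v] allE[of _ c]) simp

lemma simP_ctx: "(u, v) \<in> simP act \<Longrightarrow> (p @ u @ q, p @ v @ q) \<in> simP act"
proof -
  assume uv: "(u, v) \<in> simP act"
  have 1: "(u @ q, v @ q) \<in> simP act"
  proof (cases "q = []")
    case False
    then show ?thesis using simP_mr[OF uv] by (simp add: words_def)
  qed (use uv in simp)
  show ?thesis
  proof (cases "p = []")
    case False
    then show ?thesis using simP_ml[OF 1] by (simp add: words_def)
  qed (use 1 in simp)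
qed

lemma simP_words: "(u, v) \<in> simP act \<Longrightarrow> u \<in> words \<and> v \<in> words"
  using simP_equiv equiv_type by blast

lemma simP_trans: "(u, v) \<in> simP act \<Longrightarrow> (v, w) \<in> simP act \<Longrightarrow> (u, w) \<in> simP act"
  using simP_equiv unfolding equiv_def trans_def by blast

lemma cl_eq: "(u, v) \<in> simP act \<Longrightarrow> cl u = cl v"
  unfolding cl_def using simP_equiv equiv_class_eq_iff by metis

lemma cl_eq_iff: "u \<in> words \<Longrightarrow> v \<in> words \<Longrightarrow> cl u = cl v \<longleftrightarrow> (u, v) \<in> simP act"
  unfolding cl_def using simP_equiv eq_equiv_class_iff by metis

lemma cl_self: "u \<in> words \<Longrightarrow> u \<in> cl u"
  unfolding cl_def using simP_equiv equiv_class_self by metis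

lemma cl_mult: "a \<in> words \<Longrightarrow> b \<in> words \<Longrightarrow> pmult act (cl a) (cl b) = cl (a @ b)"
proof -
  assume a: "a \<in> words" and b: "b \<in> words"
  have key: "(a @ b, a' @ b') \<in> simP act" if "a' \<in> cl a" "b' \<in> cl b" for a' b'
  proof -
    have "(a, a') \<in> simP act" "(b, b') \<in> simP act" using that unfolding cl_def by auto
    then have "(a @ b, a' @ b) \<in> simP act" "(a' @ b, a' @ b') \<in> simP act"
      using simP_ctx[of a a' "[]" b] simP_ctx[of b b' a' "[]"] by auto
    then show ?thesis using simP_trans by blast
  qed
  show ?thesis
  proof
    show "pmult act (cl a) (cl b) \<subseteq> cl (a @ b)"
      unfolding pmult_def
    proof
      fix y assume "y \<in> simP act `` {x @ z |x z. x \<in> cl a \<and> z \<in> cl b}"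
      then obtain x z where "x \<in> cl a" "z \<in> cl b" "(x @ z, y) \<in> simP act" by blast
      then show "y \<in> cl (a @ b)" using key simP_trans unfolding cl_def by blast
    qed
    show "cl (a @ b) \<subseteq> pmult act (cl a) (cl b)"
      unfolding pmult_def using cl_self[OF a] cl_self[OF b] unfolding cl_def by blast
  qed
qed

lemma Pcar_eq: "Pcar act = {cl w | w. w \<in> words}"
  unfolding Pcar_def quotient_def cl_def by blast

lemma cl_Pcar: "w \<in> words \<Longrightarrow> cl w \<in> Pcar act"
  unfolding Pcar_eq by blast

lemma Pcar_mult: "A \<in> Pcar act \<Longrightarrow> B \<in> Pcar act \<Longrightarrow> pmult act A B \<in> Pcar act"
  unfolding Pcar_eq using cl_mult words_app by blast

lemma gen_simP: "(u, v) \<in> gens act \<Longrightarrow> (p @ u @ q, p @ v @ q) \<in> simP act"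
  using gens_simP simP_ctx by blast

lemma embX_cl: "embX act e = cl [Inr e]" unfolding embX_def cl_def ..
lemma embT_cl: "embT act t = cl [Inl t]" unfolding embT_def cl_def ..

lemma HQ_eq: "HQ act Y = {cl [Inl t, Inr e] | t e. e \<in> Y \<and> act t e \<in> Y}"
  unfolding HQ_def embX_cl embT_cl using cl_mult[of "[Inl _]" "[Inr _]"] by (simp add: words_def)

lemma HQ_Pcar: "HQ act Y \<subseteq> Pcar act"
  unfolding HQ_eq Pcar_eq by (auto simp: words_def)

lemma Qcar_mult: "A \<in> Qcar act Y \<Longrightarrow> B \<in> Qcar act Y \<Longrightarrow> pmult act A B \<in> Qcar act Y"
  unfolding Qcar_def by blast

lemma HQ_Qcar: "HQ act Y \<subseteq> Qcar act Y"
  unfolding Qcar_def by blast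

lemma Qcar_induct: "HQ act Y \<subseteq> S \<Longrightarrow> (\<And>a b. a \<in> S \<Longrightarrow> b \<in> S \<Longrightarrow> pmult act a b \<in> S) \<Longrightarrow> Qcar act Y \<subseteq> S"
  unfolding Qcar_def by blast

lemma Qcar_Pcar: "Qcar act Y \<subseteq> Pcar act"
  using Qcar_induct[OF HQ_Pcar] Pcar_mult by blast


lemma gens_ker: "gens act \<subseteq> {(a, b). a \<in> words \<and> b \<in> words \<and> phi a = phi b}"
  unfolding gens_def words_def by auto

lemma ker_cong: "congruence_on words (@) {(a, b). a \<in> words \<and> b \<in> words \<and> phi a = phi (b :: ('a + 'x) list)}"
  unfolding congruence_on_def equiv_def refl_on_def sym_def trans_def
  by (auto simp: phi_append words_def)

lemma simP_phi: "(u, v) \<in> simP act \<Longrightarrow> phi u = phi v"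
  using least_sub[OF ker_cong gens_ker] unfolding simP_def by blast

definition Phi :: "('a + 'x) list set \<Rightarrow> 'a" where
  "Phi A = phi (SOME a. a \<in> A)"

lemma Phi_cl: "u \<in> words \<Longrightarrow> Phi (cl u) = phi u"
proof -
  assume u: "u \<in> words"
  have "(SOME a. a \<in> cl u) \<in> cl u" using cl_self[OF u] by (rule someI)
  then have "(u, SOME a. a \<in> cl u) \<in> simP act" unfolding cl_def by blast
  then show ?thesis unfolding Phi_def using simP_phi by metis
qed

lemma KP_cong: "congruence_on (Pcar act) (pmult act) {(A, B). A \<in> Pcar act \<and> B \<in> Pcar act \<and> Phi A = Phi B}"
  unfolding congruence_on_def
proof (intro conjI allI impI)
  show "equiv (Pcar act) {(A, B). A \<in> Pcar act \<and> B \<in> Pcar act \<and> Phi A = Phi B}"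
    unfolding equiv_def refl_on_def sym_def trans_def by auto
next
  fix a b c assume h: "(a, b) \<in> {(A, B). A \<in> Pcar act \<and> B \<in> Pcar act \<and> Phi A = Phi B} \<and> c \<in> Pcar act"
  then obtain x y z where xyz: "a = cl x" "b = cl y" "c = cl z" "x \<in> words" "y \<in> words" "z \<in> words"
    unfolding Pcar_eq by blast
  have "Phi a = Phi b" using h by auto
  then have e: "phi x = phi y" using xyz Phi_cl by simp
  show "(pmult act c a, pmult act c b) \<in> {(A, B). A \<in> Pcar act \<and> B \<in> Pcar act \<and> Phi A = Phi B}"
    "(pmult act a c, pmult act b c) \<in> {(A, B). A \<in> Pcar act \<and> B \<in> Pcar act \<and> Phi A = Phi B}"
    using xyz e by (auto simp: cl_mult Phi_cl words_app phi_append cl_Pcar)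
qed

lemma embX_Pcar: "embX act e \<in> Pcar act"
  unfolding embX_cl Pcar_eq by (auto simp: words_def)

lemma sigmaP_KP: "sigmaP act \<subseteq> {(A, B). A \<in> Pcar act \<and> B \<in> Pcar act \<and> Phi A = Phi B}"
  unfolding sigmaP_def
  by (rule least_sub[OF KP_cong]) (auto simp: embX_Pcar embX_cl Phi_cl words_def cl_Pcar)

lemma sigmaP_cong: "congruence_on (Pcar act) (pmult act) (sigmaP act)"
  unfolding sigmaP_def by (rule least_cong(1)) (auto simp: Pcar_mult embX_Pcar)

lemma sigmaP_gen: "(embX act e, embX act f) \<in> sigmaP act"
  unfolding sigmaP_def by (rule subsetD[OF least_cong(2)]) (auto simp: Pcar_mult embX_Pcar)

lemma HQ_mem: "e \<in> Y \<Longrightarrow> act t e \<in> Y \<Longrightarrow> cl [Inl t, Inr e] \<in> Qcar act Y"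
  using HQ_Qcar unfolding HQ_eq by blast

lemma Y_Qcar: assumes "\<And>x. act 1 x = x" "e \<in> Y" shows "embX act e \<in> Qcar act Y"
proof -
  have q: "cl [Inl 1, Inr e] \<in> Qcar act Y" using HQ_mem[of e Y 1] assms by simp
  have "([Inl 1] @ [Inr e], [Inr top] @ [Inr e]) \<in> simP act"
    using gen_simP[of "[Inl 1]" "[Inr top]" "[]" "[Inr e]"] by (simp add: gens_def)
  then have a: "cl [Inl 1, Inr e] = cl [Inr top, Inr e]" by (simp add: cl_eq)
  have "([Inr top, Inr e], [Inr (inf top e)]) \<in> simP act"
    using gen_simP[of "[Inr top, Inr e]" "[Inr (inf top e)]" "[]" "[]"] by (simp add: gens_def)
  then have b: "cl [Inr top, Inr e] = cl [Inr e]" by (simp add: cl_eq)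
  show ?thesis using q a b by (simp add: embX_cl)
qed

lemma sigmaQ_cong: assumes "\<And>x. act 1 x = x" shows "congruence_on (Qcar act Y) (pmult act) (sigmaQ act Y)"
  unfolding sigmaQ_def
proof (rule least_cong(1))
  show "\<And>a b. a \<in> Qcar act Y \<Longrightarrow> b \<in> Qcar act Y \<Longrightarrow> pmult act a b \<in> Qcar act Y" by (rule Qcar_mult)
  show "{(embX act e, embX act f) |e f. e \<in> Y \<and> f \<in> Y} \<subseteq> Qcar act Y \<times> Qcar act Y"
    using Y_Qcar[OF assms] by blast
qed

lemma sigmaQ_gen: assumes "\<And>x. act 1 x = x" "e \<in> Y" "f \<in> Y"
  shows "(embX act e, embX act f) \<in> sigmaQ act Y"
proof -
  have "{(embX act e, embX act f) |e f. e \<in> Y \<and> f \<in> Y} \<subseteq> sigmaQ act Y"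
    unfolding sigmaQ_def
  proof (rule least_cong(2))
    show "\<And>a b. a \<in> Qcar act Y \<Longrightarrow> b \<in> Qcar act Y \<Longrightarrow> pmult act a b \<in> Qcar act Y" by (rule Qcar_mult)
    show "{(embX act e, embX act f) |e f. e \<in> Y \<and> f \<in> Y} \<subseteq> Qcar act Y \<times> Qcar act Y"
      using Y_Qcar[OF assms(1)] by blast
  qed
  then show ?thesis using assms(2,3) by blast
qed

lemma sigmaP_equiv: "equiv (Pcar act) (sigmaP act)"
  using sigmaP_cong unfolding congruence_on_def by blast

lemma sigmaP_compat: "(a, b) \<in> sigmaP act \<Longrightarrow> c \<in> Pcar act \<Longrightarrow>
   (pmult act c a, pmult act c b) \<in> sigmaP act \<and> (pmult act a c, pmult act b c) \<in> sigmaP act"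
  using sigmaP_cong unfolding congruence_on_def by blast

lemma sigmaQ_sigmaP: assumes "\<And>x. act 1 x = x" shows "sigmaQ act Y \<subseteq> sigmaP act"
proof -
  let ?R = "sigmaP act \<inter> Qcar act Y \<times> Qcar act Y"
  have e: "equiv (Qcar act Y) ?R"
  proof (rule equivI)
    show "?R \<subseteq> Qcar act Y \<times> Qcar act Y" by blast
    show "refl_on (Qcar act Y) ?R"
    proof (rule refl_onI)
      fix x assume x: "x \<in> Qcar act Y"
      then have "x \<in> Pcar act" using Qcar_Pcar by blast
      then have "(x, x) \<in> sigmaP act" using sigmaP_equiv unfolding equiv_def by (blast dest: refl_onD)
      then show "(x, x) \<in> ?R" using x by blast
    qed
    show "sym ?R" using sigmaP_equiv unfolding equiv_def sym_def by blast
    show "trans ?R" using sigmaP_equiv unfolding equiv_def trans_def by blast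
  qed
  have c: "\<forall>a b c. (a, b) \<in> ?R \<and> c \<in> Qcar act Y \<longrightarrow> (pmult act c a, pmult act c b) \<in> ?R \<and> (pmult act a c, pmult act b c) \<in> ?R"
  proof (intro allI impI)
    fix a b c assume h: "(a, b) \<in> ?R \<and> c \<in> Qcar act Y"
    then have ab: "(a, b) \<in> sigmaP act" "a \<in> Qcar act Y" "b \<in> Qcar act Y" "c \<in> Qcar act Y" by auto
    have "c \<in> Pcar act" using ab(4) Qcar_Pcar by blast
    from sigmaP_compat[OF ab(1) this] have "(pmult act c a, pmult act c b) \<in> sigmaP act"
      "(pmult act a c, pmult act b c) \<in> sigmaP act" by auto
    moreover have "pmult act c a \<in> Qcar act Y" "pmult act c b \<in> Qcar act Y"
      "pmult act a c \<in> Qcar act Y" "pmult act b c \<in> Qcar act Y" using ab Qcar_mult by auto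
    ultimately show "(pmult act c a, pmult act c b) \<in> ?R \<and> (pmult act a c, pmult act b c) \<in> ?R" by auto
  qed
  have cc: "congruence_on (Qcar act Y) (pmult act) ?R"
    unfolding congruence_on_def[of "Qcar act Y" "pmult act" ?R] using e c by (rule conjI)
  have g: "{(embX act e, embX act f) | e f. e \<in> Y \<and> f \<in> Y} \<subseteq> ?R"
  proof
    fix p assume "p \<in> {(embX act e, embX act f) | e f. e \<in> Y \<and> f \<in> Y}"
    then obtain e f where p: "p = (embX act e, embX act f)" "e \<in> Y" "f \<in> Y" by blast
    show "p \<in> ?R" using p Y_Qcar[OF assms, of e Y] Y_Qcar[OF assms, of f Y] sigmaP_gen[of e f] by simp
  qed
  have "sigmaQ act Y \<subseteq> ?R" unfolding sigmaQ_def using least_sub[OF cc g] .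
  then show ?thesis by blast
qed


context
  fixes Y :: "'x set"
  assumes act_one: "\<And>x. act 1 x = x"
    and act_mult: "\<And>s t x. act (s * t) x = act s (act t x)"
    and Y_sub: "\<And>e f. e \<in> Y \<Longrightarrow> f \<in> Y \<Longrightarrow> inf e f \<in> Y"
    and condA: "\<And>t e f. e \<in> Y \<Longrightarrow> f \<in> Y \<Longrightarrow> e \<le> f \<Longrightarrow> act t f \<in> Y \<Longrightarrow> act t e \<in> Y"
    and condB: "\<And>t. \<exists>g\<in>Y. act t g \<in> Y"
begin

lemma sQ_equiv: "equiv (Qcar act Y) (sigmaQ act Y)"
  using sigmaQ_cong[OF act_one] unfolding congruence_on_def by blast

lemma sQ_compat: "(a, b) \<in> sigmaQ act Y \<Longrightarrow> c \<in> Qcar act Y \<Longrightarrow>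
   (pmult act c a, pmult act c b) \<in> sigmaQ act Y \<and> (pmult act a c, pmult act b c) \<in> sigmaQ act Y"
  using sigmaQ_cong[OF act_one] unfolding congruence_on_def by blast

lemma sQ_sym: "(a, b) \<in> sigmaQ act Y \<Longrightarrow> (b, a) \<in> sigmaQ act Y"
  using sQ_equiv unfolding equiv_def by (blast dest: symD)

lemma sQ_trans: "(a, b) \<in> sigmaQ act Y \<Longrightarrow> (b, c) \<in> sigmaQ act Y \<Longrightarrow> (a, c) \<in> sigmaQ act Y"
  using sQ_equiv unfolding equiv_def by (blast dest: transD)

lemma sQ_refl: "a \<in> Qcar act Y \<Longrightarrow> (a, a) \<in> sigmaQ act Y"
  using sQ_equiv unfolding equiv_def by (blast dest: refl_onD)

lemma sQ_Qcar: "(a, b) \<in> sigmaQ act Y \<Longrightarrow> a \<in> Qcar act Y \<and> b \<in> Qcar act Y"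
  using sQ_equiv equiv_type by blast

lemma te_inf: "pmult act (cl [Inl t, Inr e]) (embX act f) = cl [Inl t, Inr (inf e f)]"
proof -
  have "pmult act (cl [Inl t, Inr e]) (embX act f) = cl ([Inl t] @ [Inr e, Inr f] @ [])"
    unfolding embX_cl by (subst cl_mult) (auto simp: words_def)
  also have "\<dots> = cl ([Inl t] @ [Inr (inf e f)] @ [])"
    by (rule cl_eq, rule gen_simP) (auto simp: gens_def)
  finally show ?thesis by simp
qed

lemma same_t:
  assumes "e \<in> Y" "f \<in> Y" "act t e \<in> Y" "act t f \<in> Y"
  shows "(cl [Inl t, Inr e], cl [Inl t, Inr f]) \<in> sigmaQ act Y"
proof -
  have A: "cl [Inl t, Inr e] \<in> Qcar act Y" using HQ_mem assms by blast
  have B: "cl [Inl t, Inr f] \<in> Qcar act Y" using HQ_mem assms by blast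
  have 1: "(pmult act (cl [Inl t, Inr e]) (embX act e), pmult act (cl [Inl t, Inr e]) (embX act f)) \<in> sigmaQ act Y"
    using sQ_compat[OF sigmaQ_gen[OF act_one assms(1,2)] A] by blast
  have 2: "(pmult act (cl [Inl t, Inr f]) (embX act f), pmult act (cl [Inl t, Inr f]) (embX act e)) \<in> sigmaQ act Y"
    using sQ_compat[OF sigmaQ_gen[OF act_one assms(2,1)] B] by blast
  from 1 2 have "(cl [Inl t, Inr e], cl [Inl t, Inr (inf e f)]) \<in> sigmaQ act Y"
    "(cl [Inl t, Inr f], cl [Inl t, Inr (inf e f)]) \<in> sigmaQ act Y"
    by (simp_all add: te_inf inf_commute)
  then show ?thesis using sQ_sym sQ_trans by blast
qed

lemma prod_rep:
  assumes "e \<in> Y" "act t e \<in> Y" "f \<in> Y" "act s f \<in> Y"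
  shows "\<exists>h. h \<in> Y \<and> act (t * s) h \<in> Y \<and>
    (pmult act (cl [Inl t, Inr e]) (cl [Inl s, Inr f]), cl [Inl (t * s), Inr h]) \<in> sigmaQ act Y"
proof -
  obtain h0 where h0: "h0 \<in> Y" "act (t * s) h0 \<in> Y" using condB by blast
  define h where "h = inf f h0"
  have hY: "h \<in> Y" unfolding h_def using Y_sub assms h0 by blast
  have h1: "act s h \<in> Y" using condA[OF hY assms(3) _ assms(4)] unfolding h_def by simp
  have h2: "act (t * s) h \<in> Y" using condA[OF hY h0(1) _ h0(2)] unfolding h_def by simp
  have h3: "act t (act s h) \<in> Y" using h2 act_mult by simp
  let ?X1 = "cl [Inl t, Inr (act s h)]" and ?X2 = "cl [Inl s, Inr h]"
  have X1: "?X1 \<in> Qcar act Y" using HQ_mem h1 h3 by blast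
  have X2: "?X2 \<in> Qcar act Y" using HQ_mem hY h1 by blast
  have SF: "cl [Inl s, Inr f] \<in> Qcar act Y" using HQ_mem assms by blast
  have r1: "(cl [Inl t, Inr e], ?X1) \<in> sigmaQ act Y" by (rule same_t) (use assms h1 h3 in auto)
  have r2: "(cl [Inl s, Inr f], ?X2) \<in> sigmaQ act Y" by (rule same_t) (use assms hY h1 in auto)
  have s1: "(pmult act (cl [Inl t, Inr e]) (cl [Inl s, Inr f]), pmult act ?X1 (cl [Inl s, Inr f])) \<in> sigmaQ act Y"
    using sQ_compat[OF r1 SF] by blast
  have s2: "(pmult act ?X1 (cl [Inl s, Inr f]), pmult act ?X1 ?X2) \<in> sigmaQ act Y"
    using sQ_compat[OF r2 X1] by blast
  have "pmult act ?X1 ?X2 = cl ([Inl t] @ (Inr (word_plus act [Inl s, Inr h]) # [Inl s, Inr h]) @ [])"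
    by (subst cl_mult) (auto simp: words_def word_plus_def)
  also have "\<dots> = cl ([Inl t] @ [Inl s, Inr h] @ [])"
    by (rule cl_eq, rule gen_simP) (auto simp: gens_def)
  also have "\<dots> = cl ([] @ [Inl t, Inl s] @ [Inr h])" by simp
  also have "\<dots> = cl ([] @ [Inl (t * s)] @ [Inr h])"
    by (rule cl_eq, rule gen_simP) (auto simp: gens_def)
  finally have "pmult act ?X1 ?X2 = cl [Inl (t * s), Inr h]" by simp
  then show ?thesis using s1 s2 sQ_trans hY h2 by metis
qed

lemma Q_rep: "\<alpha> \<in> Qcar act Y \<Longrightarrow> \<exists>t e. e \<in> Y \<and> act t e \<in> Y \<and> (\<alpha>, cl [Inl t, Inr e]) \<in> sigmaQ act Y"
proof -
  let ?S = "{\<alpha> \<in> Qcar act Y. \<exists>t e. e \<in> Y \<and> act t e \<in> Y \<and> (\<alpha>, cl [Inl t, Inr e]) \<in> sigmaQ act Y}"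
  have "Qcar act Y \<subseteq> ?S"
  proof (rule Qcar_induct)
    show "HQ act Y \<subseteq> ?S"
    proof
      fix x assume x: "x \<in> HQ act Y"
      then obtain t e where "x = cl [Inl t, Inr e]" "e \<in> Y" "act t e \<in> Y" unfolding HQ_eq by blast
      then show "x \<in> ?S" using x HQ_Qcar sQ_refl by blast
    qed
  next
    fix a b assume a: "a \<in> ?S" and b: "b \<in> ?S"
    then obtain t e s f where te: "e \<in> Y" "act t e \<in> Y" "(a, cl [Inl t, Inr e]) \<in> sigmaQ act Y"
      and sf: "f \<in> Y" "act s f \<in> Y" "(b, cl [Inl s, Inr f]) \<in> sigmaQ act Y" by blast
    have Q: "a \<in> Qcar act Y" "b \<in> Qcar act Y" "cl [Inl t, Inr e] \<in> Qcar act Y"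
      using a b sQ_Qcar te(3) by blast+
    have 1: "(pmult act a b, pmult act (cl [Inl t, Inr e]) b) \<in> sigmaQ act Y"
      using sQ_compat[OF te(3) Q(2)] by blast
    have 2: "(pmult act (cl [Inl t, Inr e]) b, pmult act (cl [Inl t, Inr e]) (cl [Inl s, Inr f])) \<in> sigmaQ act Y"
      using sQ_compat[OF sf(3) Q(3)] by blast
    obtain h where h: "h \<in> Y" "act (t * s) h \<in> Y"
      "(pmult act (cl [Inl t, Inr e]) (cl [Inl s, Inr f]), cl [Inl (t * s), Inr h]) \<in> sigmaQ act Y"
      using prod_rep[OF te(1,2) sf(1,2)] by blast
    have "(pmult act a b, cl [Inl (t * s), Inr h]) \<in> sigmaQ act Y" using 1 2 h(3) sQ_trans by blast
    then show "pmult act a b \<in> ?S" using h Qcar_mult Q by blast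
  qed
  then show "\<alpha> \<in> Qcar act Y \<Longrightarrow> ?thesis" by blast
qed

lemma main_dir:
  assumes "\<alpha> \<in> Qcar act Y" "\<beta> \<in> Qcar act Y" "(\<alpha>, \<beta>) \<in> sigmaP act"
  shows "(\<alpha>, \<beta>) \<in> sigmaQ act Y"
proof -
  obtain t e where te: "e \<in> Y" "act t e \<in> Y" "(\<alpha>, cl [Inl t, Inr e]) \<in> sigmaQ act Y"
    using Q_rep[OF assms(1)] by blast
  obtain s f where sf: "f \<in> Y" "act s f \<in> Y" "(\<beta>, cl [Inl s, Inr f]) \<in> sigmaQ act Y"
    using Q_rep[OF assms(2)] by blast
  have p1: "(\<alpha>, cl [Inl t, Inr e]) \<in> sigmaP act" "(\<beta>, cl [Inl s, Inr f]) \<in> sigmaP act"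
    using te(3) sf(3) sigmaQ_sigmaP[OF act_one] by blast+
  have "(cl [Inl t, Inr e], cl [Inl s, Inr f]) \<in> sigmaP act"
    using p1 assms(3) sigmaP_equiv unfolding equiv_def by (meson symD transD)
  then have "Phi (cl [Inl t, Inr e]) = Phi (cl [Inl s, Inr f])" using sigmaP_KP by blast
  then have ts: "t = s" by (simp add: Phi_cl words_def)
  have "(cl [Inl t, Inr e], cl [Inl s, Inr f]) \<in> sigmaQ act Y"
    unfolding ts by (rule same_t) (use te sf ts in auto)
  then show ?thesis using te(3) sf(3) sQ_sym sQ_trans by blast
qed

end
end


theorem mainTheorem17:
  fixes act :: "'a::monoid_mult \<Rightarrow> 'x::bounded_semilattice_inf_top \<Rightarrow> 'x"
    and Y :: "'x set"
  assumes act_one: "\<And>x. act 1 x = x"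
    and act_mult: "\<And>s t x. act (s * t) x = act s (act t x)"
    and act_mono: "\<And>t e f. e \<le> f \<Longrightarrow> act t e \<le> act t f"
    and Y_sub: "\<And>e f. e \<in> Y \<Longrightarrow> f \<in> Y \<Longrightarrow> inf e f \<in> Y"
    and Y_id: "\<exists>i\<in>Y. \<forall>e\<in>Y. inf i e = e"
    and condA: "\<And>t e f. e \<in> Y \<Longrightarrow> f \<in> Y \<Longrightarrow> e \<le> f \<Longrightarrow> act t f \<in> Y \<Longrightarrow> act t e \<in> Y"
    and condB: "\<And>t. \<exists>g\<in>Y. act t g \<in> Y"
    and \<alpha>Q: "\<alpha> \<in> Qcar act Y"
    and \<beta>Q: "\<beta> \<in> Qcar act Y"
  shows "(\<alpha>, \<beta>) \<in> sigmaQ act Y \<longleftrightarrow> (\<alpha>, \<beta>) \<in> sigmaP act"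
proof
  assume "(\<alpha>, \<beta>) \<in> sigmaQ act Y"
  then show "(\<alpha>, \<beta>) \<in> sigmaP act" using sigmaQ_sigmaP[where act=act, OF act_one] by blast
next
  assume P: "(\<alpha>, \<beta>) \<in> sigmaP act"
  show "(\<alpha>, \<beta>) \<in> sigmaQ act Y"
    by (rule main_dir[where act=act and Y=Y]) (fact act_one act_mult Y_sub condA condB \<alpha>Q \<beta>Q P)+
qed

end
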